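(* Let $n\ge 2$, let $TT_n$ be the transitive tournament on $n$ vertices, and let $\alpha=(\alpha_1,\dots,\alpha_s)\in\mathbb{K}_s$ with $\sum_{i=1}^s|\alpha_i|=n-1$. Then the number $f_{TT_n}(\alpha)$ of oriented (Hamiltonian) paths of type $P(\alpha)$ in $TT_n$ equals $\mathcal{F}(\alpha)$ if $\alpha$ is non-symmetric, and equals $\frac{1}{2}\mathcal{F}(\alpha)$ if $\alpha$ is symmetric.
   Context: A tournament is an orientation of a complete graph. The transitive tournament $TT_n$ has vertices $v_1,\dots,v_n$ and arcs $(v_i,v_j)$ for all $i<j$. For $s\ge1$, $\mathbb{K}_s=\{(\alpha_1,\dots,\alpha_s)\in\mathbb{Z}^s:\ \alpha_i\alpha_{i+1}<0 \text{ for all } 1\le i\le s-1\}$ (in particular, when $s\ge 2$ all entries are nonzero and signs alternate; we take all entries nonzero). An oriented path is a digraph whose underlying graph is a path; a block is a maximal directed subpath. An oriented path $P$ is of type $P(\alpha_1,\dots,\alpha_s)$ if $P$ is the concatenation of $s$ blocks $I_1,\dots,I_s$, where $I_i$ has ends $x_i,y_i$, $I_i\cap I_{i+1}=\{y_i\}=\{x_{i+1}\}$, $I_i$ has length $|\alpha_i|$, and $\alpha_i>0$ iff $I_i$ is directed from $x_i$ to $y_i$. $f_T(\alpha)$ denotes the number of (distinct, i.e. with distinct arc sets) oriented paths of type $P(\alpha)$ in $T$. For $\alpha=(\alpha_1,\dots,\alpha_s)$, write $-\alpha=(-\alpha_1,\dots,-\alpha_s)$ and $\overline{\alpha}=(\alpha_s,\dots,\alpha_1)$;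 $\alpha$ is symmetric if $\alpha=-\overline{\alpha}$. The path-function $\mathcal{F}$ on tuples in $\bigcup_{s\ge1}\mathbb{K}_s$ (with nonzero entries) is defined recursively: $\mathcal{F}(\alpha_1)=1$ for every nonzero integer $\alpha_1$; for $s\ge2$, $\mathcal{F}(\alpha_1,\dots,\alpha_s)=\sum_{i=1}^s\mathcal{F}(\alpha_1,\dots,\alpha_{i-1},\alpha_i*1,\alpha_{i+1},\dots,\alpha_s)$, where $\alpha_i*1=\alpha_i-1$ if $\alpha_i>0$ and $\alpha_i*1=\alpha_i+1$ if $\alpha_i<0$, and where a tuple containing a zero entry is reduced by the rules $\mathcal{F}(0,\alpha_2,\dots,\alpha_t)=\mathcal{F}(\alpha_2,\dots,\alpha_t)$, $\mathcal{F}(\alpha_1,\dots,\alpha_{t},0)=\mathcal{F}(\alpha_1,\dots,\alpha_{t})$, and $\mathcal{F}(\alpha_1,\dots,\alpha_r,0,\alpha_{r+2},\dots,\alpha_s)=\mathcal{F}(\alpha_1,\dots,\alpha_{r-1},\alpha_r+\alpha_{r+2},\alpha_{r+3},\dots,\alpha_s)$ (here $\alpha_r,\alpha_{r+2}$ have the same sign). *)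

theory Defs
  imports Complex_Main
begin

definition inK :: "int list \<Rightarrow> bool" where
  "inK \<alpha> \<longleftrightarrow> \<alpha> \<noteq> [] \<and> (\<forall>x\<in>set \<alpha>. x \<noteq> 0)
      \<and> (\<forall>i. Suc i < length \<alpha> \<longrightarrow> \<alpha> ! i * \<alpha> ! Suc i < 0)"

definition symmetric_tuple :: "int list \<Rightarrow> bool" where
  "symmetric_tuple \<alpha> \<longleftrightarrow> \<alpha> = map uminus (rev \<alpha>)"

text \<open>Transitive tournament TT_n on vertices 0..n-1 (v_i corresponds to i-1).\<close>
definition TT :: "nat \<Rightarrow> (nat \<times> nat) set" where
  "TT n = {(i, j). i < j \<and> j < n}"

text \<open>Direction word of the type P(alpha): True = forward arc.\<close>
definition dirs :: "int list \<Rightarrow> bool list" where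
  "dirs \<alpha> = concat (map (\<lambda>a. replicate (nat \<bar>a\<bar>) (a > 0)) \<alpha>)"

definition step_arc :: "'v list \<Rightarrow> bool list \<Rightarrow> nat \<Rightarrow> 'v \<times> 'v" where
  "step_arc p d k = (if d ! k then (p ! k, p ! Suc k) else (p ! Suc k, p ! k))"

definition is_path_of_type :: "'v set \<Rightarrow> ('v \<times> 'v) set \<Rightarrow> int list \<Rightarrow> 'v list \<Rightarrow> bool" where
  "is_path_of_type V A \<alpha> p \<longleftrightarrow> distinct p \<and> set p \<subseteq> V \<and> length p = Suc (length (dirs \<alpha>))
     \<and> (\<forall>k < length (dirs \<alpha>). step_arc p (dirs \<alpha>) k \<in> A)"

definition path_arcs :: "'v list \<Rightarrow> bool list \<Rightarrow> ('v \<times> 'v) set" where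
  "path_arcs p d = step_arc p d ` {..<length d}"

text \<open>Number of distinct (by arc set) oriented paths of type P(alpha) in digraph (V,A).\<close>
definition f_count :: "'v set \<Rightarrow> ('v \<times> 'v) set \<Rightarrow> int list \<Rightarrow> nat" where
  "f_count V A \<alpha> = card {path_arcs p (dirs \<alpha>) | p. is_path_of_type V A \<alpha> p}"

definition star1 :: "int \<Rightarrow> int" where
  "star1 a = a - sgn a"

definition reduce_at :: "int list \<Rightarrow> nat \<Rightarrow> int list" where
  "reduce_at xs i =
     (if xs ! i \<noteq> 0 then xs
      else if i = 0 then tl xs
      else if Suc i = length xs then butlast xs
      else take (i - 1) xs @ [xs ! (i - 1) + xs ! Suc i] @ drop (i + 2) xs)"

definition F_meas :: "int list \<Rightarrow> nat" where
  "F_meas xs = nat (2 * sum_list (map abs xs) + int (length xs))"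

lemma sl_abs_nonneg: "0 \<le> sum_list (map abs (xs::int list))"
  by (induction xs) auto

lemma sl_upd: "i < length xs \<Longrightarrow>
   sum_list (map abs (xs[i := y])) = sum_list (map abs xs) - \<bar>xs ! i\<bar> + \<bar>y::int\<bar>"
proof (induction xs arbitrary: i)
  case Nil then show ?case by simp
next
  case (Cons a xs) then show ?case by (cases i) auto
qed

lemma sl_butlast: "sum_list (map abs (butlast (xs::int list))) \<le> sum_list (map abs xs)"
  by (induction xs) (auto simp: sl_abs_nonneg)

lemma meas_lt:
  "2 * sum_list (map abs ys) + int (length ys) < 2 * sum_list (map abs xs) + int (length xs)
   \<Longrightarrow> F_meas ys < F_meas xs"
  using sl_abs_nonneg[of ys] sl_abs_nonneg[of xs] by (simp add: F_meas_def)

lemma F_meas_dec: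
  assumes i: "i < length xs" and l: "\<not> length xs \<le> 1"
  shows "F_meas (reduce_at (xs[i := star1 (xs ! i)]) i) < F_meas xs"
proof -
  define ys where "ys = xs[i := star1 (xs ! i)]"
  have ly: "length ys = length xs" by (simp add: ys_def)
  have yi: "ys ! i = star1 (xs ! i)" using i by (simp add: ys_def)
  have sy: "sum_list (map abs ys) = sum_list (map abs xs) - \<bar>xs ! i\<bar> + \<bar>star1 (xs ! i)\<bar>"
    using i by (simp add: ys_def sl_upd)
  have ab: "\<bar>star1 a\<bar> = (if a = 0 then 0 else \<bar>a\<bar> - 1)" for a :: int
    by (auto simp: star1_def sgn_if)
  have nn: "0 \<le> sum_list (map abs ys)" "0 \<le> sum_list (map abs xs)" by (rule sl_abs_nonneg)+
  show ?thesis
  proof (cases "ys ! i = 0")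
    case False
    then have "reduce_at ys i = ys" by (simp add: reduce_at_def)
    moreover have "xs ! i \<noteq> 0" using False yi by (auto simp: star1_def)
    moreover have "\<bar>star1 (xs ! i)\<bar> = \<bar>xs ! i\<bar> - 1" using ab \<open>xs ! i \<noteq> 0\<close> by simp
    ultimately show ?thesis using sy ly unfolding ys_def[symmetric] by (intro meas_lt) simp
  next
    case z: True
    have le: "sum_list (map abs ys) \<le> sum_list (map abs xs)" using sy ab by auto
    show ?thesis
    proof (cases "i = 0")
      case True
      then have r0: "reduce_at ys i = tl ys" using z by (simp add: reduce_at_def)
      moreover have "sum_list (map abs (tl ys)) \<le> sum_list (map abs ys)"
        by (cases ys) auto
      moreover have "sum_list (map abs (tl ys)) \<ge> 0" by (rule sl_abs_nonneg)
      moreover have "length (tl ys) < length ys" using ly l by simp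
      ultimately show ?thesis using le ly unfolding ys_def[symmetric] r0 by (intro meas_lt) linarith
    next
      case i0: False
      show ?thesis
      proof (cases "Suc i = length ys")
        case True
        then have r0: "reduce_at ys i = butlast ys" using z i0 by (simp add: reduce_at_def)
        moreover have "sum_list (map abs (butlast ys)) \<le> sum_list (map abs ys)"
          by (rule sl_butlast)
        moreover have "sum_list (map abs (butlast ys)) \<ge> 0" by (rule sl_abs_nonneg)
        moreover have "length (butlast ys) < length ys" using ly l by simp
        ultimately show ?thesis using le ly unfolding ys_def[symmetric] r0 by (intro meas_lt) linarith
      next
        case False
        have r: "reduce_at ys i = take (i - 1) ys @ [ys ! (i - 1) + ys ! Suc i] @ drop (i + 2) ys"
          using z i0 False by (simp add: reduce_at_def)
        have si: "Suc i < length ys" using False i ly by simp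
        have dec: "ys = take (i - 1) ys @ [ys ! (i - 1), ys ! i, ys ! Suc i] @ drop (i + 2) ys"
        proof -
          have d1: "drop (Suc i) ys = ys ! Suc i # drop (i + 2) ys" using Cons_nth_drop_Suc[of "Suc i" ys] si
            by simp
          have d2: "drop i ys = ys ! i # drop (Suc i) ys" using si
            by (simp add: Cons_nth_drop_Suc)
          have d3: "drop (i - 1) ys = ys ! (i - 1) # drop i ys" using Cons_nth_drop_Suc[of "i - 1" ys] si i0
            by simp
          show ?thesis using d1 d2 d3 by (metis append_take_drop_id append_Cons append_Nil)
        qed
        have s1: "sum_list (map abs ys) = sum_list (map abs (take (i - 1) ys)) + (\<bar>ys ! (i - 1)\<bar> + \<bar>ys ! i\<bar> + \<bar>ys ! Suc i\<bar>) + sum_list (map abs (drop (i + 2) ys))"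
          by (subst dec) simp
        have s2: "sum_list (map abs (reduce_at ys i)) = sum_list (map abs (take (i - 1) ys)) + \<bar>ys ! (i - 1) + ys ! Suc i\<bar> + sum_list (map abs (drop (i + 2) ys))"
          unfolding r by simp
        have "\<bar>ys ! (i - 1) + ys ! Suc i\<bar> \<le> \<bar>ys ! (i - 1)\<bar> + \<bar>ys ! Suc i\<bar>" by (rule abs_triangle_ineq)
        then have "sum_list (map abs (reduce_at ys i)) \<le> sum_list (map abs ys)" using s1 s2 z by simp
        moreover have "length (reduce_at ys i) < length ys" unfolding r using si i0 by simp
        moreover have "sum_list (map abs (reduce_at ys i)) \<ge> 0" by (rule sl_abs_nonneg)
        ultimately show ?thesis using le ly unfolding ys_def[symmetric] r by (intro meas_lt) linarith
      qed
    qed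
  qed
qed

function PF :: "int list \<Rightarrow> nat" where
  "PF xs = (if length xs \<le> 1 then 1
            else (\<Sum>i<length xs. PF (reduce_at (xs[i := star1 (xs ! i)]) i)))"
  by auto
termination
  by (relation "measure F_meas") (auto intro: F_meas_dec)

end

theory Submission
  imports Defs
begin

definition del :: "'a list \<Rightarrow> nat \<Rightarrow> 'a list" where
  "del xs k = take k xs @ drop (Suc k) xs"
definition ins :: "'a list \<Rightarrow> nat \<Rightarrow> 'a \<Rightarrow> 'a list" where
  "ins xs k x = take k xs @ x # drop k xs"

lemma length_del[simp]: "k < length xs \<Longrightarrow> length (del xs k) = length xs - 1"
  by (simp add: del_def)
lemma length_ins[simp]: "k \<le> length xs \<Longrightarrow> length (ins xs k x) = Suc (length xs)"
  by (simp add: ins_def)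
lemma nth_del: "k < length xs \<Longrightarrow> i < length xs - 1 \<Longrightarrow>
   del xs k ! i = (if i < k then xs ! i else xs ! Suc i)"
  by (auto simp: del_def nth_append min_def)
lemma nth_ins: "k \<le> length xs \<Longrightarrow> i \<le> length xs \<Longrightarrow>
   ins xs k x ! i = (if i < k then xs ! i else if i = k then x else xs ! (i - 1))"
proof -
  assume a: "k \<le> length xs" "i \<le> length xs"
  show ?thesis
  proof (cases "i < k")
    case True then show ?thesis using a by (simp add: ins_def nth_append)
  next
    case False
    then have e: "ins xs k x ! i = (x # drop k xs) ! (i - k)" using a by (simp add: ins_def nth_append min_def)
    show ?thesis
    proof (cases "i = k")
      case True then show ?thesis using e by simp
    next
      case ne: False
      then have "i - k = Suc (i - Suc k)" using False by simp
      then have "ins xs k x ! i = drop k xs ! (i - Suc k)" using e by simp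
      also have "\<dots> = xs ! (i - 1)" using a False ne by simp
      finally show ?thesis using False ne by simp
    qed
  qed
qed
lemma del_ins: "k \<le> length xs \<Longrightarrow> del (ins xs k x) k = xs"
  by (simp add: del_def ins_def min_def)
lemma ins_del: "k < length xs \<Longrightarrow> ins (del xs k) k (xs ! k) = xs"
  by (simp add: del_def ins_def min_def id_take_nth_drop[symmetric])
lemma set_del: "distinct xs \<Longrightarrow> k < length xs \<Longrightarrow> set (del xs k) = set xs - {xs ! k}"
proof -
  assume a: "distinct xs" "k < length xs"
  have "xs = take k xs @ xs ! k # drop (Suc k) xs" using a by (simp add: id_take_nth_drop)
  then have "distinct (take k xs @ xs ! k # drop (Suc k) xs)" using a by simp
  moreover have "set xs = set (take k xs @ xs ! k # drop (Suc k) xs)" using a by (metis id_take_nth_drop)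
  ultimately show ?thesis by (auto simp: del_def)
qed
lemma distinct_del: "distinct xs \<Longrightarrow> distinct (del xs k)"
  by (simp add: del_def set_take_disj_set_drop_if_distinct distinct_take distinct_drop)
lemma set_ins: "k \<le> length xs \<Longrightarrow> set (ins xs k x) = insert x (set xs)"
proof -
  assume "k \<le> length xs"
  have "set xs = set (take k xs @ drop k xs)" by simp
  then show ?thesis by (auto simp: ins_def simp del: append_take_drop_id)
qed
lemma distinct_ins: "k \<le> length xs \<Longrightarrow> distinct xs \<Longrightarrow> x \<notin> set xs \<Longrightarrow> distinct (ins xs k x)"
proof -
  assume a: "k \<le> length xs" "distinct xs" "x \<notin> set xs"
  have "distinct (take k xs @ drop k xs)" using a by simp
  then show ?thesis using a(3) unfolding ins_def
    using set_take_disj_set_drop_if_distinct[OF a(2), of k k] by (auto dest: in_set_takeD in_set_dropD)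
qed

definition P :: "bool list \<Rightarrow> nat list set" where
  "P d = {p. distinct p \<and> set p = {..<Suc (length d)} \<and> length p = Suc (length d)
              \<and> (\<forall>k<length d. d ! k = (p ! k < p ! Suc k))}"

definition C :: "bool list \<Rightarrow> nat \<Rightarrow> bool" where
  "C d j = ((d ! j \<and> (Suc j = length d \<or> \<not> d ! Suc j)) \<or> (\<not> d ! j \<and> (j = 0 \<or> d ! (j - 1))))"

definition J :: "bool list \<Rightarrow> nat set" where
  "J d = {j. j < length d \<and> C d j}"

lemma finite_P: "finite (P d)"
proof -
  have "P d \<subseteq> {p. set p \<subseteq> {..<Suc (length d)} \<and> length p = Suc (length d)}"
    by (auto simp: P_def)
  then show ?thesis using finite_lists_length_eq[of "{..<Suc (length d)}"] finite_subset by blast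
qed

lemma P_nil: "P [] = {[0]}"
proof -
  have "p = [0]" if "set p = {0}" "length p = 1" for p :: "nat list"
    using that by (cases p) auto
  then show ?thesis by (auto simp: P_def)
qed



definition pos :: "bool list \<Rightarrow> nat \<Rightarrow> nat" where
  "pos d j = (if d ! j then Suc j else j)"

lemma P_D:
  assumes "q \<in> P e"
  shows "distinct q" "set q = {..<Suc (length e)}" "length q = Suc (length e)"
    "\<And>k. k < length e \<Longrightarrow> e ! k = (q ! k < q ! Suc k)"
    "\<And>i. i < Suc (length e) \<Longrightarrow> q ! i < Suc (length e)"
  using assms unfolding P_def by (auto dest: nth_mem)

lemma L1:
  assumes j: "j \<in> J d" and q: "q \<in> P (del d j)"
  shows "ins q (pos d j) (length d) \<in> P d"
proof -
  define m where "m = length d"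
  have jm: "j < m" and Cj: "C d j" using j by (auto simp: J_def m_def)
  have lq: "length q = m" using P_D(3)[OF q] jm by (simp add: m_def)
  have sq: "set q = {..<m}" using P_D(2)[OF q] jm by (simp add: m_def)
  have dq: "distinct q" using P_D(1)[OF q] .
  have qlt: "q ! i < m" if "i < m" for i using sq lq that nth_mem by fastforce
  have qs: "(if i < j then d ! i else d ! Suc i) = (q ! i < q ! Suc i)" if "Suc i < m" for i
    using P_D(4)[OF q, of i] that jm nth_del[of j d i] by (simp add: m_def)
  have pl: "pos d j \<le> m" using jm by (simp add: pos_def)
  define p where "p = ins q (pos d j) m"
  have np: "p ! i = (if i < pos d j then q ! i else if i = pos d j then m else q ! (i - 1))" if "i \<le> m" for i
    unfolding p_def using nth_ins[of "pos d j" q i m] pl lq that by simp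
  have steps: "d ! k = (p ! k < p ! Suc k)" if k: "k < m" for k
  proof (cases "d ! j")
    case True
    then have ps: "pos d j = Suc j" by (simp add: pos_def)
    have c: "Suc j = m \<or> \<not> d ! Suc j" using Cj True by (auto simp: C_def m_def)
    consider "k < j" | "k = j" | "k = Suc j" | "k > Suc j" by linarith
    then show ?thesis
    proof cases
      case 1 then show ?thesis using np[of k] np[of "Suc k"] k ps qs[of k] jm by simp
    next
      case 2 then show ?thesis using np[of k] np[of "Suc k"] k ps qlt[of j] True by simp
    next
      case 3 then show ?thesis using np[of k] np[of "Suc k"] k ps qlt[of "Suc j"] c by simp
    next
      case 4 then have e: "Suc (k - 1) = k" by simp
      show ?thesis using 4 np[of k] np[of "Suc k"] k ps qs[of "k - 1"] unfolding e by (auto split: if_splits)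
    qed
  next
    case False
    then have ps: "pos d j = j" by (simp add: pos_def)
    have c: "j = 0 \<or> d ! (j - 1)" using Cj False by (auto simp: C_def)
    consider "Suc k < j" | "Suc k = j" | "k = j" | "k > j" by linarith
    then show ?thesis
    proof cases
      case 1 then show ?thesis using np[of k] np[of "Suc k"] k ps qs[of k] jm by simp
    next
      case 2 then have e: "k = j - 1" by simp
      show ?thesis using 2 np[of k] np[of "Suc k"] k ps qlt[of k] c unfolding e by auto
    next
      case 3 then show ?thesis using np[of k] np[of "Suc k"] k ps qlt[of j] False jm by simp
    next
      case 4 then have e: "Suc (k - 1) = k" by simp
      show ?thesis using 4 np[of k] np[of "Suc k"] k ps qs[of "k - 1"] unfolding e by (auto split: if_splits)
    qed
  qed
  have "distinct p" unfolding p_def using distinct_ins[OF pl[folded lq] dq] sq by simp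
  moreover have "set p = {..<Suc m}" unfolding p_def using set_ins[OF pl[folded lq]] sq by auto
  moreover have "length p = Suc m" unfolding p_def using pl lq by simp
  ultimately show ?thesis using steps unfolding P_def p_def m_def by simp
qed

lemma L2:
  assumes p: "p \<in> P d" and dne: "d \<noteq> []"
  shows "\<exists>j\<in>J d. \<exists>q\<in>P (del d j). p = ins q (pos d j) (length d)"
proof -
  define m where "m = length d"
  have m1: "m \<ge> 1" using dne by (simp add: m_def Suc_le_eq)
  have lp: "length p = Suc m" and sp: "set p = {..<Suc m}" and dp: "distinct p"
    using P_D[OF p] by (auto simp: m_def)
  have ps: "d ! i = (p ! i < p ! Suc i)" if "i < m" for i using P_D(4)[OF p] that by (simp add: m_def)
  have "m \<in> set p" using sp by simp
  then obtain k where k: "k < Suc m" "p ! k = m" using lp by (auto simp: in_set_conv_nth)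
  have pm: "p ! i < m" if "i \<le> m" "i \<noteq> k" for i
  proof -
    have "p ! i \<in> set p" using that lp by simp
    moreover have "p ! i \<noteq> m" using that k lp nth_eq_iff_index_eq[OF dp, of i k] by auto
    ultimately show ?thesis using sp by auto
  qed
  define q where "q = del p k"
  have lq: "length q = m" unfolding q_def using k lp by simp
  have dq: "distinct q" unfolding q_def using dp by (rule distinct_del)
  have sq: "set q = {..<m}"
  proof -
    have "set q = set p - {m}" unfolding q_def using set_del[OF dp, of k] k lp by simp
    also have "\<dots> = {..<m}" using sp by (simp add: lessThan_Suc)
    finally show ?thesis .
  qed
  have qi: "q ! i = (if i < k then p ! i else p ! Suc i)" if "i < m" for i
    unfolding q_def using nth_del[of k p i] k lp that by simp
  have pq: "p = ins q k m" unfolding q_def using ins_del[of k p] k lp by simp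
  have memP: "q \<in> P (del d j)" if "j < m" "\<And>i. Suc i < m \<Longrightarrow> (if i < j then d ! i else d ! Suc i) = (q ! i < q ! Suc i)" for j
  proof -
    have le: "length (del d j) = m - 1" using that(1) by (simp add: m_def)
    have "\<forall>i<length (del d j). del d j ! i = (q ! i < q ! Suc i)"
      using that nth_del[of j d] le by (simp add: m_def)
    then show ?thesis using le m1 dq sq lq unfolding P_def by auto
  qed
  have dist: "p ! a \<noteq> p ! b" if "a \<le> m" "b \<le> m" "a \<noteq> b" for a b
    using that lp nth_eq_iff_index_eq[OF dp, of a b] by auto
  consider "k = 0" | "k = m" | "0 < k" "k < m" using k by linarith
  then show ?thesis
  proof cases
    case 1
    have d0: "\<not> d ! 0" using ps[of 0] m1 1 k pm[of 1] by simp
    have jJ: "0 \<in> J d" using d0 m1 dne by (simp add: J_def C_def m_def)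
    have "q \<in> P (del d 0)"
      by (rule memP) (use m1 qi ps 1 in auto)
    moreover have "pos d 0 = k" using d0 1 by (simp add: pos_def)
    ultimately show ?thesis using jJ pq m_def by metis
  next
    case 2
    have d0: "d ! (m - 1)" using ps[of "m - 1"] m1 2 k pm[of "m - 1"] by simp
    have jJ: "m - 1 \<in> J d" using d0 m1 dne by (simp add: J_def C_def m_def)
    have "q \<in> P (del d (m - 1))"
      by (rule memP) (use m1 qi ps 2 in auto)
    moreover have "pos d (m - 1) = k" using d0 2 m1 by (simp add: pos_def)
    ultimately show ?thesis using jJ pq m_def by metis
  next
    case 3
    have e: "Suc (k - 1) = k" using 3 by simp
    have a1: "d ! (k - 1)" using ps[of "k - 1"] 3 k pm[of "k - 1"] e by simp
    have a2: "\<not> d ! k" using ps[of k] 3 k pm[of "Suc k"] by simp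
    show ?thesis
    proof (cases "p ! Suc k < p ! (k - 1)")
      case True
      have jJ: "k - 1 \<in> J d" using a1 a2 3 e dne by (simp add: J_def C_def m_def)
      have "q \<in> P (del d (k - 1))"
      proof (rule memP)
        fix i assume i: "Suc i < m"
        consider "i < k - 1" | "i = k - 1" | "i \<ge> k" by linarith
        then show "(if i < k - 1 then d ! i else d ! Suc i) = (q ! i < q ! Suc i)"
        proof cases
          case 1 then have "Suc i < k" by linarith
          then show ?thesis using 1 qi[of i] qi[of "Suc i"] ps[of i] i by simp
        next
          case 2 then show ?thesis using qi[of i] qi[of "Suc i"] e a2 True i by simp
        next
          case 3 then show ?thesis using qi[of i] qi[of "Suc i"] ps[of "Suc i"] i by auto
        qed
      qed (use 3 in simp)
      moreover have "pos d (k - 1) = k" using a1 e by (simp add: pos_def)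
      ultimately show ?thesis using jJ pq m_def by metis
    next
      case False
      have jJ: "k \<in> J d" using a1 a2 3 dne by (simp add: J_def C_def m_def)
      have ne: "p ! Suc k \<noteq> p ! (k - 1)" using dist[of "Suc k" "k - 1"] 3 by simp
      have "q \<in> P (del d k)"
      proof (rule memP)
        fix i assume i: "Suc i < m"
        consider "i < k - 1" | "i = k - 1" | "i \<ge> k" by linarith
        then show "(if i < k then d ! i else d ! Suc i) = (q ! i < q ! Suc i)"
        proof cases
          case 1 then have "Suc i < k" by linarith
          then show ?thesis using 1 qi[of i] qi[of "Suc i"] ps[of i] i by simp
        next
          case 2 then show ?thesis using qi[of i] qi[of "Suc i"] e a1 False ne i 3 by auto
        next
          case 3 then show ?thesis using qi[of i] qi[of "Suc i"] ps[of "Suc i"] i by auto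
        qed
      qed (use 3 in simp)
      moreover have "pos d k = k" using a2 by (simp add: pos_def)
      ultimately show ?thesis using jJ pq m_def by metis
    qed
  qed
qed

lemma P_len: "q \<in> P e \<Longrightarrow> length q = Suc (length e)" by (simp add: P_def)

lemma pos_le: "j < length d \<Longrightarrow> pos d j \<le> length (del d j) + 1"
  by (auto simp: pos_def)

lemma L3a:
  assumes j: "j \<in> J d" and j': "j' \<in> J d" and q: "q \<in> P (del d j)" and q': "q' \<in> P (del d j')"
    and eq: "ins q (pos d j) (length d) = ins q' (pos d j') (length d)" and lt: "j < j'"
  shows False
proof -
  define m where "m = length d"
  have jm: "j < m" "j' < m" using j j' by (auto simp: J_def m_def)
  have lq: "length q = m" "length q' = m" using P_len[OF q] P_len[OF q'] jm by (auto simp: m_def)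
  define p where "p = ins q (pos d j) m"
  have pP: "p \<in> P d" unfolding p_def m_def by (rule L1[OF j q])
  have dp: "distinct p" and lp: "length p = Suc m" using pP by (auto simp: P_def m_def)
  have pl: "pos d j \<le> m" "pos d j' \<le> m" using jm by (auto simp: pos_def)
  have a: "p ! pos d j = m" unfolding p_def using nth_ins[of "pos d j" q "pos d j" m] pl lq by simp
  have b: "p ! pos d j' = m" using eq unfolding p_def m_def[symmetric]
    using nth_ins[of "pos d j'" q' "pos d j'" m] pl lq by simp
  have pe: "pos d j = pos d j'" using a b nth_eq_iff_index_eq[OF dp, of "pos d j" "pos d j'"] pl lp by simp
  then have jj: "j' = Suc j" "d ! j" "\<not> d ! j'" using lt by (auto simp: pos_def split: if_splits)
  have qq: "q = q'" using arg_cong[OF eq, of "\<lambda>x. del x (pos d j)"] pe pl lq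
    by (simp add: del_ins m_def)
  have ld: "length (del d j) = m - 1" "length (del d j') = m - 1" using jm by (auto simp: m_def)
  have "del d j ! j = (q ! j < q ! Suc j)" using P_D(4)[OF q, of j] ld jm jj by simp
  moreover have "del d j ! j = d ! Suc j" using nth_del[of j d j] jm jj by (simp add: m_def)
  moreover have "del d j' ! j = (q' ! j < q' ! Suc j)" using P_D(4)[OF q', of j] ld jm jj by simp
  moreover have "del d j' ! j = d ! j" using nth_del[of j' d j] jm jj by (simp add: m_def)
  ultimately show False using jj qq by simp
qed

lemma word_rec:
  assumes dne: "d \<noteq> []"
  shows "card (P d) = (\<Sum>j\<in>J d. card (P (del d j)))"
proof -
  define A where "A j = (\<lambda>q. ins q (pos d j) (length d)) ` P (del d j)" for j
  have PU: "P d = (\<Union>j\<in>J d. A j)"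
  proof
    show "P d \<subseteq> (\<Union>j\<in>J d. A j)"
    proof
      fix p assume "p \<in> P d"
      from L2[OF this dne] obtain j q where "j \<in> J d" "q \<in> P (del d j)" "p = ins q (pos d j) (length d)"
        by blast
      then show "p \<in> (\<Union>j\<in>J d. A j)" unfolding A_def by blast
    qed
    show "(\<Union>j\<in>J d. A j) \<subseteq> P d" unfolding A_def using L1 by blast
  qed
  have fin: "finite (J d)" by (simp add: J_def)
  have disj: "A j \<inter> A j' = {}" if "j \<in> J d" "j' \<in> J d" "j \<noteq> j'" for j j'
  proof (rule ccontr)
    assume "A j \<inter> A j' \<noteq> {}"
    then obtain q q' where q: "q \<in> P (del d j)" and q': "q' \<in> P (del d j')"
      and e: "ins q (pos d j) (length d) = ins q' (pos d j') (length d)"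
      unfolding A_def by blast
    show False
    proof (cases "j < j'")
      case True then show False using L3a[OF that(1,2) q q' e] by simp
    next
      case False then have "j' < j" using that(3) by simp
      then show False using L3a[OF that(2,1) q' q e[symmetric]] by simp
    qed
  qed
  have inj: "inj_on (\<lambda>q. ins q (pos d j) (length d)) (P (del d j))" if "j \<in> J d" for j
  proof (rule inj_onI)
    fix x y assume x: "x \<in> P (del d j)" and y: "y \<in> P (del d j)"
      and e: "ins x (pos d j) (length d) = ins y (pos d j) (length d)"
    have jm: "j < length d" using that by (simp add: J_def)
    have "pos d j \<le> length x" "pos d j \<le> length y" using P_len[OF x] P_len[OF y] jm by (auto simp: pos_def)
    then show "x = y" using arg_cong[OF e, of "\<lambda>z. del z (pos d j)"] by (simp add: del_ins)
  qed
  have "card (P d) = (\<Sum>j\<in>J d. card (A j))"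
    unfolding PU by (rule card_UN_disjoint) (use fin disj in \<open>auto simp: A_def finite_P\<close>)
  also have "\<dots> = (\<Sum>j\<in>J d. card (P (del d j)))"
    by (rule sum.cong) (auto simp: A_def card_image[OF inj])
  finally show ?thesis .
qed



definition altl :: "int list \<Rightarrow> bool" where
  "altl xs = ((\<forall>x\<in>set xs. x \<noteq> 0) \<and> successively (\<lambda>x y. x * y < 0) xs)"

lemma inK_altl: "inK xs \<longleftrightarrow> xs \<noteq> [] \<and> altl xs"
  by (auto simp: inK_def altl_def successively_conv_nth)

lemma altl_Cons: "altl (a # xs) \<longleftrightarrow> a \<noteq> 0 \<and> altl xs \<and> (xs \<noteq> [] \<longrightarrow> a * hd xs < 0)"
  by (auto simp: altl_def successively_Cons)

lemma altl_append: "altl (xs @ ys) \<longleftrightarrow> altl xs \<and> altl ys \<and> (xs \<noteq> [] \<longrightarrow> ys \<noteq> [] \<longrightarrow> last xs * hd ys < 0)"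
  by (auto simp: altl_def successively_append_iff)

lemma dirs_Nil[simp]: "dirs [] = []" by (simp add: dirs_def)
lemma dirs_Cons[simp]: "dirs (a # xs) = replicate (nat \<bar>a\<bar>) (a > 0) @ dirs xs" by (simp add: dirs_def)
lemma dirs_append[simp]: "dirs (xs @ ys) = dirs xs @ dirs ys" by (simp add: dirs_def)
lemma length_dirs: "length (dirs xs) = (\<Sum>a\<leftarrow>xs. nat \<bar>a\<bar>)"
  by (induction xs) auto

lemma dirs_hd: "altl (a # xs) \<Longrightarrow> xs \<noteq> [] \<Longrightarrow> dirs xs \<noteq> [] \<and> dirs xs ! 0 = (\<not> a > 0)"
proof -
  assume a: "altl (a # xs)" "xs \<noteq> []"
  then obtain b ys where xs: "xs = b # ys" by (cases xs) auto
  have "b \<noteq> 0" "a * b < 0" using a xs by (auto simp: altl_Cons)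
  then show ?thesis using xs by (auto simp: mult_less_0_iff nth_append)
qed

fun phi :: "int list \<Rightarrow> nat \<Rightarrow> nat" where
  "phi [] i = 0"
| "phi (a # xs) 0 = (if a > 0 then nat \<bar>a\<bar> - 1 else 0)"
| "phi (a # xs) (Suc i) = nat \<bar>a\<bar> + phi xs i"

lemma del_append1: "k < length xs \<Longrightarrow> del (xs @ ys) k = del xs k @ ys"
  by (simp add: del_def)
lemma del_append2: "del (xs @ ys) (length xs + k) = xs @ del ys k"
  by (simp add: del_def)
lemma del_replicate: "k < n \<Longrightarrow> del (replicate n b) k = replicate (n - 1) b"
  by (simp add: del_def min_def replicate_add[symmetric])

lemma rep_star1: "a \<noteq> 0 \<Longrightarrow> replicate (nat \<bar>star1 a\<bar>) (star1 a > 0) = replicate (nat \<bar>a\<bar> - 1) (a > 0)"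
  by (cases "a = 1 \<or> a = -1") (auto simp: star1_def sgn_if nat_diff_distrib)

lemma del_phi: "(\<forall>x\<in>set xs. x \<noteq> 0) \<Longrightarrow> i < length xs \<Longrightarrow>
    del (dirs xs) (phi xs i) = dirs (xs[i := star1 (xs ! i)])"
proof (induction xs arbitrary: i)
  case Nil then show ?case by simp
next
  case (Cons a xs)
  have a0: "a \<noteq> 0" using Cons.prems by simp
  show ?case
  proof (cases i)
    case 0
    have "del (replicate (nat \<bar>a\<bar>) (a > 0)) (if a > 0 then nat \<bar>a\<bar> - 1 else 0) = replicate (nat \<bar>a\<bar> - 1) (a > 0)"
      using a0 by (intro del_replicate) auto
    moreover have "(if a > 0 then nat \<bar>a\<bar> - 1 else 0) < length (replicate (nat \<bar>a\<bar>) (a > 0))"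
      using a0 by auto
    ultimately have "del (dirs (a # xs)) (phi (a # xs) 0) = replicate (nat \<bar>a\<bar> - 1) (a > 0) @ dirs xs"
      by (simp only: dirs_Cons phi.simps del_append1)
    also have "\<dots> = dirs ((a # xs)[0 := star1 ((a # xs) ! 0)])"
      by (simp only: list_update_code nth_Cons_0 dirs_Cons rep_star1[OF a0])
    finally show ?thesis using 0 by simp
  next
    case (Suc i')
    have "del (replicate (nat \<bar>a\<bar>) (a > 0) @ dirs xs) (length (replicate (nat \<bar>a\<bar>) (a > 0)) + phi xs i')
      = replicate (nat \<bar>a\<bar>) (a > 0) @ del (dirs xs) (phi xs i')" by (rule del_append2)
    then show ?thesis using Suc Cons by simp
  qed
qed

lemma phi_lt: "(\<forall>x\<in>set xs. x \<noteq> 0) \<Longrightarrow> i < length xs \<Longrightarrow> phi xs i < length (dirs xs)"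
proof (induction xs arbitrary: i)
  case Nil then show ?case by simp
next
  case (Cons a xs) then show ?case by (cases i) auto
qed

lemma phi_inj: "(\<forall>x\<in>set xs. x \<noteq> 0) \<Longrightarrow> inj_on (phi xs) {..<length xs}"
proof (induction xs)
  case Nil then show ?case by simp
next
  case (Cons a xs)
  have lt: "phi (a # xs) 0 < nat \<bar>a\<bar>" using Cons.prems by auto
  show ?case
  proof (rule inj_onI)
    fix i j assume i: "i \<in> {..<length (a # xs)}" and j: "j \<in> {..<length (a # xs)}"
      and e: "phi (a # xs) i = phi (a # xs) j"
    show "i = j"
    proof (cases i; cases j)
      fix i' j' assume "i = Suc i'" "j = Suc j'"
      then show "i = j" using e i j Cons inj_onD[OF Cons.IH, of i' j'] by auto
    qed (use e lt in auto)
  qed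
qed

lemma C_phi: "altl xs \<Longrightarrow> j < length (dirs xs) \<Longrightarrow> C (dirs xs) j \<longleftrightarrow> (\<exists>i<length xs. j = phi xs i)"
proof (induction xs arbitrary: j)
  case Nil then show ?case by simp
next
  case (Cons a xs)
  define r where "r = nat \<bar>a\<bar>"
  define b where "b = (a > 0)"
  define D where "D = dirs xs"
  have a0: "a \<noteq> 0" and alt: "altl xs" using Cons.prems by (auto simp: altl_Cons)
  have r1: "r \<ge> 1" using a0 by (simp add: r_def)
  have d: "dirs (a # xs) = replicate r b @ D" by (simp add: r_def b_def D_def)
  have ld: "length (dirs (a # xs)) = r + length D" using d by simp
  have nd: "dirs (a # xs) ! k = (if k < r then b else D ! (k - r))" for k
    using d by (simp add: nth_append)
  have hdD: "D \<noteq> [] \<Longrightarrow> D ! 0 = (\<not> b)"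
  proof -
    assume "D \<noteq> []"
    then have "xs \<noteq> []" by (auto simp: D_def)
    then show ?thesis using dirs_hd[OF Cons.prems(1)] by (simp add: D_def b_def)
  qed
  have phi0: "phi (a # xs) 0 = (if b then r - 1 else 0)" by (simp add: r_def b_def)
  have phiS: "phi (a # xs) (Suc i) = r + phi xs i" for i by (simp add: r_def)
  have j: "j < r + length D" using Cons.prems ld by simp
  show ?case
  proof (cases "j < r")
    case True
    have lhs: "C (dirs (a # xs)) j \<longleftrightarrow> j = (if b then r - 1 else 0)"
    proof (cases b)
      case bT: True
      have "C (dirs (a # xs)) j \<longleftrightarrow> (Suc j = r + length D \<or> \<not> dirs (a # xs) ! Suc j)"
        unfolding C_def using nd[of j] True bT ld by simp
      also have "\<dots> \<longleftrightarrow> j = r - 1"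
      proof (cases "Suc j < r")
        case True then show ?thesis using nd[of "Suc j"] bT by auto
      next
        case False
        then have "Suc j = r" using \<open>j < r\<close> by simp
        then show ?thesis using nd[of "Suc j"] hdD bT by (cases "D = []") auto
      qed
      finally show ?thesis using bT by simp
    next
      case bF: False
      have "C (dirs (a # xs)) j \<longleftrightarrow> (j = 0 \<or> dirs (a # xs) ! (j - 1))"
        unfolding C_def using nd[of j] True bF by simp
      also have "\<dots> \<longleftrightarrow> j = 0" using nd[of "j - 1"] True bF by auto
      finally show ?thesis using bF by simp
    qed
    have rhs: "(\<exists>i<length (a # xs). j = phi (a # xs) i) \<longleftrightarrow> j = (if b then r - 1 else 0)"
    proof
      assume "\<exists>i<length (a # xs). j = phi (a # xs) i"
      then obtain i where "i < length (a # xs)" "j = phi (a # xs) i" by blast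
      then show "j = (if b then r - 1 else 0)" using True phi0 phiS by (cases i) auto
    next
      assume "j = (if b then r - 1 else 0)"
      then show "\<exists>i<length (a # xs). j = phi (a # xs) i" using phi0 by (intro exI[of _ 0]) auto
    qed
    show ?thesis using lhs rhs by simp
  next
    case False
    define j' where "j' = j - r"
    have jj: "j = r + j'" using False by (simp add: j'_def)
    have j'l: "j' < length D" using j jj by simp
    have eqC: "C (dirs (a # xs)) j \<longleftrightarrow> C D j'"
    proof -
      have e1: "dirs (a # xs) ! j = D ! j'" using nd[of j] jj by simp
      have e2: "dirs (a # xs) ! Suc j = D ! Suc j'" using nd[of "Suc j"] jj by simp
      have e3: "(j = 0 \<or> dirs (a # xs) ! (j - 1)) \<longleftrightarrow> (j' = 0 \<or> D ! (j' - 1))" if nD: "\<not> D ! j'"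
      proof (cases "j' = 0")
        case True
        then have "dirs (a # xs) ! (j - 1) = b" using nd[of "j - 1"] jj r1 by simp
        then show ?thesis using True hdD j'l nD by auto
      next
        case False
        then have e: "j - 1 = r + (j' - 1)" using jj by simp
        have "dirs (a # xs) ! (j - 1) = D ! (j' - 1)" using nd[of "j - 1"] unfolding e by simp
        then show ?thesis using False jj by simp
      qed
      show ?thesis unfolding C_def using e1 e2 e3 ld jj D_def by (cases "D ! j'") auto
    qed
    have IH: "C D j' \<longleftrightarrow> (\<exists>i<length xs. j' = phi xs i)"
      using Cons.IH[OF alt] j'l by (simp add: D_def)
    have rhs: "(\<exists>i<length (a # xs). j = phi (a # xs) i) \<longleftrightarrow> (\<exists>i<length xs. j' = phi xs i)"
    proof
      assume "\<exists>i<length (a # xs). j = phi (a # xs) i"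
      then obtain i where i: "i < length (a # xs)" "j = phi (a # xs) i" by blast
      show "\<exists>i<length xs. j' = phi xs i"
      proof (cases i)
        case 0 then show ?thesis using i phi0 jj r1 by (auto split: if_splits)
      next
        case (Suc i') then show ?thesis using i phiS jj by auto
      qed
    next
      assume "\<exists>i<length xs. j' = phi xs i"
      then obtain i where "i < length xs" "j' = phi xs i" by blast
      then show "\<exists>i<length (a # xs). j = phi (a # xs) i" using phiS jj by (intro exI[of _ "Suc i"]) auto
    qed
    show ?thesis using eqC IH rhs by simp
  qed
qed

lemma J_phi: "altl xs \<Longrightarrow> J (dirs xs) = phi xs ` {..<length xs}"
  using C_phi[of xs] phi_lt[of xs] unfolding J_def altl_def by auto



lemma star1_sign: "a \<noteq> 0 \<Longrightarrow> star1 a \<noteq> 0 \<Longrightarrow> (0 < star1 a \<longleftrightarrow> 0 < a) \<and> (star1 a < 0 \<longleftrightarrow> a < 0)"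
  by (auto simp: star1_def sgn_if split: if_splits)

lemma star1_zero: "star1 a = 0 \<longleftrightarrow> a = 0 \<or> a = 1 \<or> a = -1"
  by (auto simp: star1_def sgn_if)

lemma red:
  assumes K: "inK al" and l2: "2 \<le> length al" and il: "i < length al"
  shows "inK (reduce_at (al[i := star1 (al ! i)]) i) \<and>
         dirs (reduce_at (al[i := star1 (al ! i)]) i) = dirs (al[i := star1 (al ! i)])"
proof -
  define xs where "xs = take i al"
  define a where "a = al ! i"
  define ys where "ys = drop (Suc i) al"
  define v where "v = star1 a"
  have al: "al = xs @ a # ys" unfolding xs_def a_def ys_def using il by (simp add: id_take_nth_drop)
  have L: "al[i := star1 (al ! i)] = xs @ v # ys" unfolding xs_def a_def ys_def v_def
    using il by (simp add: upd_conv_take_nth_drop)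
  have lx: "length xs = i" using il by (simp add: xs_def)
  have alt: "altl (xs @ a # ys)" using K al inK_altl by metis
  then have ax: "altl xs" and aay: "altl (a # ys)"
    and lxa: "xs \<noteq> [] \<longrightarrow> last xs * a < 0" by (auto simp: altl_append)
  then have a0: "a \<noteq> 0" and ay: "altl ys" and ahy: "ys \<noteq> [] \<longrightarrow> a * hd ys < 0" by (auto simp: altl_Cons)
  have Li: "(xs @ v # ys) ! i = v" by (simp add: lx[symmetric])
  show ?thesis
  proof (cases "v = 0")
    case False
    have sg: "(0 < v \<longleftrightarrow> 0 < a) \<and> (v < 0 \<longleftrightarrow> a < 0)" using star1_sign[OF a0] False by (simp add: v_def)
    have r: "reduce_at (xs @ v # ys) i = xs @ v # ys" using Li False by (simp add: reduce_at_def)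
    have "altl (xs @ v # ys)"
      using ax ay lxa ahy False sg unfolding altl_append altl_Cons
      by (auto simp: mult_less_0_iff)
    then show ?thesis unfolding L r by (simp add: inK_altl)
  next
    case True
    have r0: "reduce_at (xs @ v # ys) i = (if i = 0 then tl (xs @ v # ys) else if Suc i = length (xs @ v # ys)
         then butlast (xs @ v # ys) else take (i - 1) (xs @ v # ys) @ [(xs @ v # ys) ! (i - 1) + (xs @ v # ys) ! Suc i] @ drop (i + 2) (xs @ v # ys))"
      using Li True by (simp add: reduce_at_def)
    have lal: "length al = Suc (length xs + length ys)" using al by simp
    consider "i = 0" | "i \<noteq> 0" "Suc i = length al" | "i \<noteq> 0" "Suc i \<noteq> length al" by blast
    then show ?thesis
    proof cases
      case 1
      then have "xs = []" using lx by simp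
      moreover have "ys \<noteq> []" using lal l2 lx 1 by auto
      ultimately show ?thesis unfolding L r0 using 1 True ay by (simp add: inK_altl)
    next
      case 2
      then have "ys = []" using lal lx by simp
      moreover have "xs \<noteq> []" using lx 2 by auto
      ultimately show ?thesis unfolding L r0 using 2 True ax lal by (simp add: inK_altl)
    next
      case 3
      then have xne: "xs \<noteq> []" and yne: "ys \<noteq> []" using lal lx by auto
      define xs' where "xs' = butlast xs"
      define c where "c = last xs"
      define b where "b = hd ys"
      define ys' where "ys' = tl ys"
      have xs: "xs = xs' @ [c]" using xne by (simp add: xs'_def c_def)
      have ys: "ys = b # ys'" using yne by (simp add: ys'_def b_def)
      have lx': "length xs' = i - 1" using lx xs by simp
      have ca: "c * a < 0" using lxa xne c_def by simp
      have ab: "a * b < 0" using ahy yne b_def by simp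
      have cb: "(0 < c \<longleftrightarrow> 0 < b) \<and> (c < 0 \<longleftrightarrow> b < 0) \<and> c \<noteq> 0 \<and> b \<noteq> 0" using ca ab
        by (auto simp: mult_less_0_iff)
      have cb2: "(0 < c + b \<longleftrightarrow> 0 < c) \<and> (c + b < 0 \<longleftrightarrow> c < 0)" using cb by auto
      have red: "reduce_at (xs @ v # ys) i = xs' @ (c + b) # ys'"
      proof -
        have e: "xs @ v # ys = xs' @ [c, v, b] @ ys'" using xs ys by simp
        have "take (i - 1) (xs @ v # ys) = xs'" unfolding e using lx' by simp
        moreover have "(xs @ v # ys) ! (i - 1) = c" unfolding e using lx' by (simp add: nth_append)
        moreover have "(xs @ v # ys) ! Suc i = b"
        proof -
          have "Suc i = length xs' + 2" using lx' 3 by simp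
          then show ?thesis unfolding e by (simp only: nth_append_length_plus) simp
        qed
        moreover have "drop (i + 2) (xs @ v # ys) = ys'" unfolding e using lx' 3 by simp
        ultimately show ?thesis unfolding r0 using 3 lal by simp
      qed
      have ax': "altl xs'" and lc: "xs' \<noteq> [] \<longrightarrow> last xs' * c < 0" using ax xs by (auto simp: altl_append)
      have ay': "altl ys'" and bh: "ys' \<noteq> [] \<longrightarrow> b * hd ys' < 0" using ay ys by (auto simp: altl_Cons)
      have "altl (xs' @ (c + b) # ys')"
        unfolding altl_append altl_Cons using ax' ay' lc bh cb cb2
        by (auto simp: mult_less_0_iff)
      moreover have "dirs (xs' @ (c + b) # ys') = dirs (xs @ v # ys)"
      proof -
        have "nat \<bar>c + b\<bar> = nat \<bar>c\<bar> + nat \<bar>b\<bar>" using cb by auto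
        then have "replicate (nat \<bar>c + b\<bar>) (0 < c + b) = replicate (nat \<bar>c\<bar>) (0 < c) @ replicate (nat \<bar>b\<bar>) (0 < b)"
          using cb cb2 by (simp add: replicate_add)
        then show ?thesis using xs ys True by simp
      qed
      ultimately show ?thesis unfolding L red by (simp add: inK_altl)
    qed
  qed
qed

lemma card_P_rep: "card (P (replicate k b)) = 1"
proof (induction k)
  case 0 then show ?case by (simp add: P_nil)
next
  case (Suc k)
  define a :: int where "a = (if b then int (Suc k) else - int (Suc k))"
  have na: "nat \<bar>a\<bar> = Suc k" "(0 < a) = b" unfolding a_def by auto
  have da: "dirs [a] = replicate (Suc k) b" using na by simp
  have "altl [a]" by (simp add: altl_def a_def)
  from J_phi[OF this] have J0: "J (replicate (Suc k) b) = phi [a] ` {..<length [a]}"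
    unfolding da .
  have "{..<length [a]} = {0}" by auto
  moreover have "phi [a] 0 = (if b then k else 0)" using na by simp
  ultimately have J: "J (replicate (Suc k) b) = {if b then k else 0}" using J0 by simp
  have "del (replicate (Suc k) b) (if b then k else 0) = replicate k b"
    using del_replicate[of "if b then k else 0" "Suc k" b] by (simp del: replicate_Suc)
  then show ?case using word_rec[of "replicate (Suc k) b"] J Suc by simp
qed

theorem PF_count: "inK al \<Longrightarrow> PF al = card (P (dirs al))"
proof (induction al rule: PF.induct)
  case (1 xs)
  show ?case
  proof (cases "length xs \<le> 1")
    case True
    then obtain a where "xs = [a]" using "1.prems" by (cases xs) (auto simp: inK_def)
    then show ?thesis using card_P_rep by simp
  next
    case False
    have alt: "altl xs" using "1.prems" by (simp add: inK_altl)
    have nz: "\<forall>x\<in>set xs. x \<noteq> 0" using alt by (simp add: altl_def)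
    have "PF xs = (\<Sum>i<length xs. PF (reduce_at (xs[i := star1 (xs ! i)]) i))"
      using False by simp
    also have "\<dots> = (\<Sum>i<length xs. card (P (del (dirs xs) (phi xs i))))"
    proof (rule sum.cong)
      fix i assume i: "i \<in> {..<length xs}"
      have r: "inK (reduce_at (xs[i := star1 (xs ! i)]) i) \<and>
         dirs (reduce_at (xs[i := star1 (xs ! i)]) i) = dirs (xs[i := star1 (xs ! i)])"
        using red[OF "1.prems"] False i by simp
      show "PF (reduce_at (xs[i := star1 (xs ! i)]) i) = card (P (del (dirs xs) (phi xs i)))"
        using "1.IH"[OF False i] r del_phi[OF nz, of i] i by simp
    qed simp
    also have "\<dots> = (\<Sum>j\<in>phi xs ` {..<length xs}. card (P (del (dirs xs) j)))"
      by (rule sum.reindex[OF phi_inj[OF nz], symmetric, unfolded comp_def])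
    also have "\<dots> = card (P (dirs xs))"
    proof -
      have xne: "xs \<noteq> []" using False by auto
      have "dirs xs \<noteq> []" using phi_lt[OF nz, of 0] xne by auto
      then show ?thesis using word_rec[of "dirs xs"] J_phi[OF alt] by simp
    qed
    finally show ?thesis .
  qed
qed



definition E :: "nat list \<Rightarrow> (nat \<times> nat) set" where
  "E p = (\<lambda>k. (min (p ! k) (p ! Suc k), max (p ! k) (p ! Suc k))) ` {..<length p - 1}"

lemma minmax_eq: "(min a b, max a b) = (min c d, max c (d::nat)) \<Longrightarrow> (a = c \<and> b = d) \<or> (a = d \<and> b = c)"
  by (auto simp: min_def max_def split: if_splits)

lemma arcs_E: "p \<in> P d \<Longrightarrow> path_arcs p d = E p"
proof -
  assume p: "p \<in> P d"
  have l: "length p - 1 = length d" using P_len[OF p] by simp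
  have "step_arc p d k = (min (p ! k) (p ! Suc k), max (p ! k) (p ! Suc k))" if "k < length d" for k
    using P_D(4)[OF p that] by (auto simp: step_arc_def min_def max_def)
  then show ?thesis unfolding path_arcs_def E_def l by (intro image_cong) auto
qed

lemma same_start:
  assumes dp: "distinct p" and dq: "distinct q" and l: "length q = length p"
    and sub: "E q \<subseteq> E p" and h: "p ! 0 = q ! 0"
  shows "p = q"
proof -
  have "\<forall>j\<le>i. p ! j = q ! j" if "i < length p" for i
    using that
  proof (induction i)
    case 0 then show ?case using h by simp
  next
    case (Suc i)
    have IH: "\<forall>j\<le>i. p ! j = q ! j" using Suc by simp
    have "(min (q ! i) (q ! Suc i), max (q ! i) (q ! Suc i)) \<in> E q"
      unfolding E_def using Suc.prems l by auto
    then obtain k where k: "k < length p - 1"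
      "(min (q ! i) (q ! Suc i), max (q ! i) (q ! Suc i)) = (min (p ! k) (p ! Suc k), max (p ! k) (p ! Suc k))"
      using sub unfolding E_def by blast
    have qi: "q ! i = p ! i" using IH by simp
    from minmax_eq[OF k(2)] have "q ! Suc i = p ! Suc i"
    proof
      assume a: "q ! i = p ! k \<and> q ! Suc i = p ! Suc k"
      then have "i = k" using qi nth_eq_iff_index_eq[OF dp, of i k] Suc.prems k by simp
      then show ?thesis using a by simp
    next
      assume a: "q ! i = p ! Suc k \<and> q ! Suc i = p ! k"
      then have "i = Suc k" using qi nth_eq_iff_index_eq[OF dp, of i "Suc k"] Suc.prems k by simp
      then have "q ! Suc i = q ! k" using a IH by simp
      then have "Suc i = k" using nth_eq_iff_index_eq[OF dq, of "Suc i" k] Suc.prems k l by simp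
      then show ?thesis using \<open>i = Suc k\<close> by simp
    qed
    then show ?case using IH le_Suc_eq by auto
  qed
  then show ?thesis using l by (intro nth_equalityI) auto
qed

lemma E_rev: "E (rev p) = E p"
proof -
  define l where "l = length p"
  have a: "(min (rev p ! k) (rev p ! Suc k), max (rev p ! k) (rev p ! Suc k))
     = (min (p ! (l - 2 - k)) (p ! Suc (l - 2 - k)), max (p ! (l - 2 - k)) (p ! Suc (l - 2 - k)))"
    if "k < l - 1" for k
  proof -
    have "rev p ! k = p ! Suc (l - 2 - k)" using that by (simp add: rev_nth l_def Suc_diff_Suc)
    moreover have "rev p ! Suc k = p ! (l - 2 - k)" using that by (simp add: rev_nth l_def)
    ultimately show ?thesis by (simp add: min.commute max.commute)
  qed
  show ?thesis
  proof
    show "E (rev p) \<subseteq> E p"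
    proof
      fix e assume "e \<in> E (rev p)"
      then obtain k where "k < l - 1" "e = (min (rev p ! k) (rev p ! Suc k), max (rev p ! k) (rev p ! Suc k))"
        unfolding E_def l_def by auto
      then show "e \<in> E p" using a unfolding E_def l_def by force
    qed
    show "E p \<subseteq> E (rev p)"
    proof
      fix e assume "e \<in> E p"
      then obtain k where k: "k < l - 1" "e = (min (p ! k) (p ! Suc k), max (p ! k) (p ! Suc k))"
        unfolding E_def l_def by auto
      define k' where "k' = l - 2 - k"
      have "k' < l - 1" "l - 2 - k' = k" using k by (auto simp: k'_def)
      then show "e \<in> E (rev p)" using a[of k'] k unfolding E_def l_def by force
    qed
  qed
qed

lemma nbr0:
  fixes q :: "nat list"
  assumes dq: "distinct q" and k: "k < length q - 1"
    and e: "(min x (q ! 0), max x (q ! 0)) = (min (q ! k) (q ! Suc k), max (q ! k) (q ! Suc k))"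
  shows "x = q ! 1"
proof -
  from minmax_eq[OF e] show ?thesis
  proof
    assume "x = q ! k \<and> q ! 0 = q ! Suc k"
    then have "q ! 0 = q ! Suc k" by simp
    moreover have "Suc k < length q" using k by linarith
    moreover have "q \<noteq> []" using k by auto
    ultimately show ?thesis using nth_eq_iff_index_eq[OF dq, of 0 "Suc k"] by simp
  next
    assume a: "x = q ! Suc k \<and> q ! 0 = q ! k"
    moreover have "q \<noteq> []" "k < length q" using k by auto
    ultimately have "k = 0" using nth_eq_iff_index_eq[OF dq, of 0 k] by simp
    then show ?thesis using a by simp
  qed
qed

lemma eq_or_rev:
  assumes dp: "distinct p" and dq: "distinct q" and l: "length q = length p" and l2: "length p \<ge> 2"
    and s: "set p = set q" and e: "E p = E q"
  shows "q = p \<or> q = rev p"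
proof (cases "p ! 0 = q ! 0")
  case True then show ?thesis using same_start[OF dp dq l] e by simp
next
  case False
  have "q ! 0 \<in> set q" using l l2 by (intro nth_mem) linarith
  then have "q ! 0 \<in> set p" using s by simp
  then obtain i where i: "i < length p" "p ! i = q ! 0" by (auto simp: in_set_conv_nth)
  have i0: "i \<noteq> 0" using i False by (cases i) auto
  show ?thesis
  proof (cases "i = length p - 1")
    case True
    have "p \<noteq> []" using l2 by auto
    then have "rev p ! 0 = p ! (length p - 1)" using rev_nth[of 0 p] by simp
    then have "rev p ! 0 = q ! 0" using i True by simp
    then have "rev p = q" using same_start[of "rev p" q] dp dq l e E_rev by simp
    then show ?thesis by simp
  next
    case False
    have e1: "(min (p ! (i - 1)) (p ! Suc (i - 1)), max (p ! (i - 1)) (p ! Suc (i - 1))) \<in> E q"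
    proof -
      have "(min (p ! (i - 1)) (p ! Suc (i - 1)), max (p ! (i - 1)) (p ! Suc (i - 1))) \<in> E p"
        unfolding E_def using i i0 by (intro imageI) simp
      then show ?thesis using e by simp
    qed
    have e2: "(min (p ! i) (p ! Suc i), max (p ! i) (p ! Suc i)) \<in> E q"
    proof -
      have "(min (p ! i) (p ! Suc i), max (p ! i) (p ! Suc i)) \<in> E p"
        unfolding E_def using i False by (intro imageI) simp
      then show ?thesis using e by simp
    qed
    have si: "Suc (i - 1) = i" using i0 by simp
    obtain k where k: "k < length q - 1" "(min (p ! (i - 1)) (q ! 0), max (p ! (i - 1)) (q ! 0)) = (min (q ! k) (q ! Suc k), max (q ! k) (q ! Suc k))"
      using e1 unfolding si i(2) E_def by auto
    obtain k' where k': "k' < length q - 1" "(min (p ! Suc i) (q ! 0), max (p ! Suc i) (q ! 0)) = (min (q ! k') (q ! Suc k'), max (q ! k') (q ! Suc k'))"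
      using e2 unfolding i(2) E_def by (auto simp: min.commute max.commute)
    have "p ! (i - 1) = p ! Suc i" using nbr0[OF dq k] nbr0[OF dq k'] by simp
    moreover have "i - 1 < length p" "Suc i < length p" using i False by auto
    ultimately show ?thesis using nth_eq_iff_index_eq[OF dp, of "i - 1" "Suc i"] by simp
  qed
qed

lemma rev_steps:
  assumes p: "p \<in> P d" and k: "k < length d"
  shows "(rev p ! k < rev p ! Suc k) = map Not (rev d) ! k"
proof -
  define m where "m = length d"
  have lp: "length p = Suc m" using P_len[OF p] by (simp add: m_def)
  have dp: "distinct p" using P_D(1)[OF p] .
  have "rev p ! k = p ! (m - k)" using k lp by (simp add: rev_nth m_def)
  moreover have "rev p ! Suc k = p ! (m - Suc k)" using k lp by (simp add: rev_nth m_def)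
  moreover have "map Not (rev d) ! k = (\<not> d ! (m - Suc k))" using k by (simp add: rev_nth m_def)
  moreover have "d ! (m - Suc k) = (p ! (m - Suc k) < p ! Suc (m - Suc k))" using P_D(4)[OF p, of "m - Suc k"] k by (simp add: m_def)
  moreover have "Suc (m - Suc k) = m - k" using k by (simp add: m_def)
  moreover have "p ! (m - Suc k) \<noteq> p ! (m - k)" using nth_eq_iff_index_eq[OF dp, of "m - Suc k" "m - k"] k lp by (simp add: m_def)
  ultimately show ?thesis by auto
qed

lemma P_rev_iff: "p \<in> P d \<Longrightarrow> (rev p \<in> P d \<longleftrightarrow> d = map Not (rev d))"
proof -
  assume p: "p \<in> P d"
  have "rev p \<in> P d \<longleftrightarrow> (\<forall>k<length d. d ! k = map Not (rev d) ! k)"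
    using p rev_steps[OF p] unfolding P_def by auto
  also have "\<dots> \<longleftrightarrow> d = map Not (rev d)"
  proof
    assume "\<forall>k<length d. d ! k = map Not (rev d) ! k"
    then show "d = map Not (rev d)" by (intro nth_equalityI) auto
  next
    assume h: "d = map Not (rev d)"
    show "\<forall>k<length d. d ! k = map Not (rev d) ! k"
      by (intro allI impI) (rule arg_cong[OF h])
  qed
  finally show ?thesis .
qed



lemma P_distinct_len: "p \<in> P d \<Longrightarrow> distinct p \<and> length p = Suc (length d) \<and> set p = {..<Suc (length d)}"
  by (simp add: P_def)

lemma arcs_eq: "p \<in> P d \<Longrightarrow> q \<in> P d \<Longrightarrow> path_arcs p d = path_arcs q d \<Longrightarrow> d \<noteq> [] \<Longrightarrow> q = p \<or> q = rev p"
  using eq_or_rev[of p q] arcs_E[of p d] arcs_E[of q d] P_distinct_len[of p d] P_distinct_len[of q d]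
  by (auto simp: Suc_le_eq)

lemma count_nonsym:
  assumes "d \<noteq> []" "d \<noteq> map Not (rev d)"
  shows "card ((\<lambda>p. path_arcs p d) ` P d) = card (P d)"
proof (rule card_image, rule inj_onI)
  fix p q assume p: "p \<in> P d" and q: "q \<in> P d" and e: "path_arcs p d = path_arcs q d"
  from arcs_eq[OF p q e assms(1)] show "p = q"
  proof
    assume "q = rev p"
    then have "rev p \<in> P d" using q by simp
    then show ?thesis using P_rev_iff[OF p] assms(2) by simp
  qed simp
qed

lemma count_sym:
  assumes dne: "d \<noteq> []" and sym: "d = map Not (rev d)"
  shows "card (P d) = 2 * card ((\<lambda>p. path_arcs p d) ` P d)"
proof -
  define f where "f p = path_arcs p d" for p :: "nat list"
  define F where "F e = {p \<in> P d. f p = e}" for e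
  have PU: "P d = (\<Union>e\<in>f ` P d. F e)" by (auto simp: F_def)
  have fin: "finite (f ` P d)" using finite_P by simp
  have F2: "card (F e) = 2" if "e \<in> f ` P d" for e
  proof -
    obtain p where p: "p \<in> P d" "e = f p" using \<open>e \<in> f ` P d\<close> by blast
    have rp: "rev p \<in> P d" using P_rev_iff[OF p(1)] sym by simp
    have "f (rev p) = f p" unfolding f_def using arcs_E[OF p(1)] arcs_E[OF rp] E_rev by simp
    then have "F e = {p, rev p}" using p rp arcs_eq[OF p(1) _ _ dne] unfolding F_def f_def by auto
    moreover have "rev p \<noteq> p"
    proof
      assume h: "rev p = p"
      have lp: "length p = Suc (length d)" and dp: "distinct p" using P_distinct_len[OF p(1)] by auto
      have "p \<noteq> []" using lp by auto
      then have "p ! (length p - 1) = p ! 0" using rev_nth[of 0 p] h by simp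
      then show False using nth_eq_iff_index_eq[OF dp, of "length p - 1" 0] lp dne by simp
    qed
    ultimately show ?thesis by simp
  qed
  have "card (P d) = (\<Sum>e\<in>f ` P d. card (F e))"
    by (subst PU, rule card_UN_disjoint) (use fin finite_P in \<open>auto simp: F_def\<close>)
  also have "\<dots> = (\<Sum>e\<in>f ` P d. 2)" using F2 by simp
  finally show ?thesis by (simp add: f_def)
qed

lemma dirs_neg_rev: "(\<forall>x\<in>set xs. x \<noteq> 0) \<Longrightarrow> dirs (map uminus (rev xs)) = map Not (rev (dirs xs))"
proof (induction xs)
  case Nil then show ?case by simp
next
  case (Cons a xs)
  have "replicate (nat \<bar>a\<bar>) (0 < - a) = replicate (nat \<bar>a\<bar>) (\<not> 0 < a)" using Cons.prems by auto
  then show ?case using Cons by (simp add: rev_map[symmetric])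
qed

lemma altl_neg_rev: "altl xs \<Longrightarrow> altl (map uminus (rev xs))"
  unfolding altl_def by (auto simp: successively_map mult.commute)

lemma tw: "altl (a # xs) \<Longrightarrow> takeWhile (\<lambda>x. x = (0 < a)) (dirs (a # xs)) = replicate (nat \<bar>a\<bar>) (0 < a)"
proof -
  assume h: "altl (a # xs)"
  have "takeWhile (\<lambda>x. x = (0 < a)) (dirs xs) = []"
  proof (cases "xs = []")
    case False
    then have "dirs xs \<noteq> []" "dirs xs ! 0 = (\<not> 0 < a)" using dirs_hd[OF h] by auto
    then show ?thesis by (cases "dirs xs") auto
  qed simp
  moreover have "takeWhile (\<lambda>x. x = (0 < a)) (replicate (nat \<bar>a\<bar>) (0 < a) @ dirs xs)
     = replicate (nat \<bar>a\<bar>) (0 < a) @ takeWhile (\<lambda>x. x = (0 < a)) (dirs xs)"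
    by (rule takeWhile_append2) auto
  ultimately show ?thesis by simp
qed

lemma dirs_inj: "altl xs \<Longrightarrow> altl ys \<Longrightarrow> dirs xs = dirs ys \<Longrightarrow> xs = ys"
proof (induction xs arbitrary: ys)
  case Nil
  then show ?case by (cases ys) (auto simp: altl_Cons)
next
  case (Cons a xs)
  have a0: "a \<noteq> 0" using Cons.prems by (simp add: altl_Cons)
  obtain b zs where ys: "ys = b # zs" using Cons.prems a0 by (cases ys) auto
  have b0: "b \<noteq> 0" using Cons.prems ys by (simp add: altl_Cons)
  have "dirs (a # xs) ! 0 = (0 < a)" "dirs (b # zs) ! 0 = (0 < b)" using a0 b0 by (auto simp: nth_append)
  then have s: "(0 < a) = (0 < b)" using Cons.prems ys by simp
  have "replicate (nat \<bar>a\<bar>) (0 < a) = replicate (nat \<bar>b\<bar>) (0 < b)"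
    using tw[of a xs] tw[of b zs] Cons.prems ys s by simp
  then have "nat \<bar>a\<bar> = nat \<bar>b\<bar>" by (metis length_replicate)
  then have ab: "a = b" using s a0 b0 by (auto simp: abs_if split: if_splits)
  then have "dirs xs = dirs zs" using Cons.prems ys by simp
  then have "xs = zs" using Cons.IH Cons.prems ys by (simp add: altl_Cons)
  then show ?case using ab ys by simp
qed

lemma sym_iff: "altl xs \<Longrightarrow> (xs = map uminus (rev xs) \<longleftrightarrow> dirs xs = map Not (rev (dirs xs)))"
proof -
  assume h: "altl xs"
  have nz: "\<forall>x\<in>set xs. x \<noteq> 0" using h by (simp add: altl_def)
  show ?thesis
  proof
    assume "xs = map uminus (rev xs)"
    then have "dirs xs = dirs (map uminus (rev xs))" by simp
    then show "dirs xs = map Not (rev (dirs xs))" using dirs_neg_rev[OF nz] by simp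
  next
    assume "dirs xs = map Not (rev (dirs xs))"
    then have "dirs xs = dirs (map uminus (rev xs))" using dirs_neg_rev[OF nz] by simp
    then show "xs = map uminus (rev xs)" using dirs_inj[OF h altl_neg_rev[OF h]] by simp
  qed
qed

lemma path_iff:
  assumes n: "n = Suc (length (dirs al))"
  shows "is_path_of_type {..<n} (TT n) al p \<longleftrightarrow> p \<in> P (dirs al)"
proof
  assume h: "is_path_of_type {..<n} (TT n) al p"
  define d where "d = dirs al"
  have dp: "distinct p" and sp: "set p \<subseteq> {..<n}" and lp: "length p = n"
    and st: "\<And>k. k < length d \<Longrightarrow> step_arc p d k \<in> TT n"
    using h n unfolding is_path_of_type_def d_def by auto
  have "card (set p) = card {..<n}" using distinct_card[OF dp] lp by simp
  then have se: "set p = {..<n}" using card_subset_eq[OF _ sp] by simp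
  have "d ! k = (p ! k < p ! Suc k)" if "k < length d" for k
    using st[OF that] by (auto simp: step_arc_def TT_def split: if_splits)
  then show "p \<in> P (dirs al)" unfolding P_def using dp se lp n d_def by simp
next
  assume p: "p \<in> P (dirs al)"
  define d where "d = dirs al"
  have dp: "distinct p" and sp: "set p = {..<n}" and lp: "length p = n"
    and st: "\<And>k. k < length d \<Longrightarrow> d ! k = (p ! k < p ! Suc k)"
    using p n unfolding P_def d_def by auto
  have "step_arc p d k \<in> TT n" if k: "k < length d" for k
  proof -
    have "p ! k \<in> set p" "p ! Suc k \<in> set p" using lp k n d_def by (auto intro!: nth_mem)
    then have "p ! k < n" "p ! Suc k < n" using sp by auto
    moreover have "p ! k \<noteq> p ! Suc k" using nth_eq_iff_index_eq[OF dp, of k "Suc k"] k lp n d_def by simp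
    ultimately show ?thesis using st[OF k] by (auto simp: step_arc_def TT_def)
  qed
  then show "is_path_of_type {..<n} (TT n) al p" unfolding is_path_of_type_def
    using dp sp lp n d_def by simp
qed

theorem theorem1:
  fixes n :: nat and \<alpha> :: "int list"
  assumes "n \<ge> 2"
    and "inK \<alpha>"
    and "(\<Sum>a\<leftarrow>\<alpha>. nat \<bar>a\<bar>) = n - 1"
  shows "real (f_count {..<n} (TT n) \<alpha>) =
           (if symmetric_tuple \<alpha> then real (PF \<alpha>) / 2 else real (PF \<alpha>))"
proof -
  define d where "d = dirs \<alpha>"
  have n: "n = Suc (length d)" using assms(1,3) length_dirs[of \<alpha>] by (simp add: d_def)
  have dne: "d \<noteq> []" using n assms(1) by auto
  have alt: "altl \<alpha>" using assms(2) by (simp add: inK_altl)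
  have fc: "f_count {..<n} (TT n) \<alpha> = card ((\<lambda>p. path_arcs p d) ` P d)"
  proof -
    have "{path_arcs p (dirs \<alpha>) | p. is_path_of_type {..<n} (TT n) \<alpha> p} = (\<lambda>p. path_arcs p d) ` P d"
      using path_iff[of n \<alpha>] n unfolding d_def by auto
    then show ?thesis by (simp add: f_count_def)
  qed
  have pf: "PF \<alpha> = card (P d)" using PF_count[OF assms(2)] by (simp add: d_def)
  have sy: "symmetric_tuple \<alpha> \<longleftrightarrow> d = map Not (rev d)"
    using sym_iff[OF alt] by (simp add: symmetric_tuple_def d_def)
  show ?thesis
  proof (cases "symmetric_tuple \<alpha>")
    case True
    then show ?thesis using count_sym[OF dne] sy fc pf by simp
  next
    case False
    then show ?thesis using count_nonsym[OF dne] sy fc pf by simp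
  qed
qed

end
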